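(* Let $M,N$ be weights of $\mathbb{R}^m,\mathbb{R}^n$, let $A\in\mathbb{R}^{m\times n}$ with $MA=AN$, and let $K\subseteq\mathbb{R}^n$ be a closed cone. If $$(A^{[*]}\circ A)^{[\dagger]}\circ K^{[*]}\subseteq K+\mathcal{N}(A\circ I),$$ then $$K^{[*]}\cap\mathcal{R}\big((A\circ I)^{[*]}\big)\subseteq A^{[*]}\circ A\circ K+\mathcal{N}(A\circ I).$$
   Context: A weight is a real symmetric matrix $W$ with $W^2=I$. $\mathbb{R}^m$ and $\mathbb{R}^n$ carry weights $M\in\mathbb{R}^{m\times m}$ and $N\in\mathbb{R}^{n\times n}$, respectively. The indefinite inner product on the space with weight $W$ is $[x,y]=\langle x,Wy\rangle$. Indefinite matrix product: if $B$ has $p$ columns and $C$ has $p$ rows (or is a vector in $\mathbb{R}^p$), $p\in\{m,n\}$, and $W$ is the weight of $\mathbb{R}^p$, then $B\circ C:=BWC$. $I$ denotes an identity matrix of the appropriate size. Indefinite adjoint of $B\in\mathbb{R}^{p\times q}$: $B^{[*]}:=W_qB^TW_p$, where $W_p,W_q$ are the weights of $\mathbb{R}^p,\mathbb{R}^q$. Indefinite Moore–Penrose inverse: for $B\in\mathbb{R}^{p\times q}$, $B^{[\dagger]}$ is the unique $X\in\mathbb{R}^{q\times p}$ such that - $B\circ X\circ B=B$, - $X\circ B\circ X=X$, - $(B\circ X)^{[*]}=B\circ X$, - $(X\circ B)^{[*]}=X\circ B$. It equals $W_qB^\dagger W_p$. Range and null space: for a matrix $B$ with $q$ columns, $\mathcal{R}(B)=\{B\circ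 x:x\in\mathbb{R}^q\}$ and $\mathcal{N}(B)=\{x\in\mathbb{R}^q:B\circ x=0\}$. A cone is a nonempty set closed under addition and under multiplication by nonnegative scalars. For $S$ a subset of $\mathbb{R}^p$ with weight $W$, the dual is $S^{[*]}=\{x\in\mathbb{R}^p:[x,t]\ge0\ \forall t\in S\}$. For a matrix $B$ and a set $S$, $B\circ S=\{B\circ s:s\in S\}$. The sum of sets is the Minkowski sum. *)

theory Defs
  imports "HOL-Analysis.Analysis"
begin

definition weight :: "real^'p^'p \<Rightarrow> bool" where
  "weight W \<longleftrightarrow> transpose W = W \<and> W ** W = mat 1"

text \<open>Indefinite matrix product B o C := B W C, where W is the weight of the
  space indexed by the columns of B (= rows of C).\<close>
definition iprod :: "real^'p^'p \<Rightarrow> real^'p^'r \<Rightarrow> real^'q^'p \<Rightarrow> real^'q^'r" where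
  "iprod W B C = B ** W ** C"

definition iprodv :: "real^'p^'p \<Rightarrow> real^'p^'r \<Rightarrow> real^'p \<Rightarrow> real^'r" where
  "iprodv W B x = B *v (W *v x)"

definition iadj :: "real^'p^'p \<Rightarrow> real^'q^'q \<Rightarrow> real^'q^'p \<Rightarrow> real^'p^'q" where
  "iadj Wp Wq B = Wq ** transpose B ** Wp"

definition impinv :: "real^'p^'p \<Rightarrow> real^'q^'q \<Rightarrow> real^'q^'p \<Rightarrow> real^'p^'q" where
  "impinv Wp Wq B = (THE X.
      iprod Wp (iprod Wq B X) B = B \<and>
      iprod Wq (iprod Wp X B) X = X \<and>
      iadj Wp Wp (iprod Wq B X) = iprod Wq B X \<and>
      iadj Wq Wq (iprod Wp X B) = iprod Wp X B)"

definition irange :: "real^'q^'q \<Rightarrow> real^'q^'p \<Rightarrow> (real^'p) set" where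
  "irange Wq B = {iprodv Wq B x | x. True}"

definition inull :: "real^'q^'q \<Rightarrow> real^'q^'p \<Rightarrow> (real^'q) set" where
  "inull Wq B = {x. iprodv Wq B x = 0}"

definition is_cone :: "(real^'p) set \<Rightarrow> bool" where
  "is_cone K \<longleftrightarrow> K \<noteq> {} \<and> (\<forall>x\<in>K. \<forall>y\<in>K. x + y \<in> K) \<and>
                 (\<forall>c::real. c \<ge> 0 \<longrightarrow> (\<forall>x\<in>K. c *\<^sub>R x \<in> K))"

definition idual :: "real^'p^'p \<Rightarrow> (real^'p) set \<Rightarrow> (real^'p) set" where
  "idual W S = {x. \<forall>t\<in>S. inner x (W *v t) \<ge> 0}"

definition iimage :: "real^'p^'p \<Rightarrow> real^'p^'r \<Rightarrow> (real^'p) set \<Rightarrow> (real^'r) set" where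
  "iimage W B S = (\<lambda>s. iprodv W B s) ` S"

definition msum :: "('a::plus) set \<Rightarrow> 'a set \<Rightarrow> 'a set" where
  "msum S T = {s + t | s t. s \<in> S \<and> t \<in> T}"

end

theory Submission imports Defs begin

declare vector_transpose_matrix[simp del]

lemma tr_inner: "inner (transpose B *v a) v = inner a (B *v (v::real^'n))"
  by (metis dot_lmul_matrix transpose_transpose vector_transpose_matrix)

lemma tr_inner2: "inner v (transpose B *v a) = inner (B *v (v::real^'n)) a"
  by (metis tr_inner inner_commute)

lemma BtB0: "transpose B *v (B *v (v::real^'n)) = 0 \<Longrightarrow> B *v v = 0"
  by (metis inner_eq_zero_iff tr_inner2 inner_zero_right)

lemma sym_by_inner:
  fixes S :: "real^'n^'n"
  assumes "\<And>x y. inner (S *v x) y = inner x (S *v y)"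
  shows "transpose S = S"
proof (subst matrix_eq, intro allI)
  fix y
  define d where "d = transpose S *v y - S *v y"
  have "inner x d = 0" for x
    unfolding d_def inner_diff_right using assms[of x y] tr_inner2[of x S y] by linarith
  from this[of d] show "transpose S *v y = S *v y" unfolding d_def by simp
qed

lemma mp_exists:
  fixes B :: "real^'n^'m"
  shows "\<exists>Y. B ** Y ** B = B \<and> Y ** B ** Y = Y \<and> transpose (B ** Y) = B ** Y
            \<and> transpose (Y ** B) = Y ** B"
proof -
  define W where "W = range (\<lambda>a. transpose B *v a)"
  define R where "R x v \<longleftrightarrow> v \<in> W \<and> transpose B *v (B *v v) = transpose B *v x" for x v
  have subW: "subspace W" unfolding W_def
    by (rule linear_subspace_image[OF matrix_vector_mul_linear subspace_UNIV])
  have subR: "subspace (range (\<lambda>u. B *v u))"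
    by (rule linear_subspace_image[OF matrix_vector_mul_linear subspace_UNIV])
  have uniq: "v = v'" if "R x v" "R x v'" for x v v'
  proof -
    from that obtain a a' where v: "v = transpose B *v a" and v': "v' = transpose B *v a'"
      unfolding R_def W_def by auto
    have "transpose B *v (B *v (v - v')) = 0" using that unfolding R_def
      by (simp add: matrix_vector_mult_diff_distrib)
    hence Bd: "B *v (v - v') = 0" by (rule BtB0)
    have "v - v' = transpose B *v (a - a')" by (simp add: v v' matrix_vector_mult_diff_distrib)
    hence "inner (v - v') (v - v') = inner (a - a') (B *v (v - v'))"
      using tr_inner[of B "a - a'" "v - v'"] by simp
    with Bd show ?thesis by simp
  qed
  have ex: "\<exists>v. R x v" for x
  proof -
    obtain y z where y: "y \<in> span (range (\<lambda>u. B *v u))"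
      and z: "\<And>w. w \<in> span (range (\<lambda>u. B *v u)) \<Longrightarrow> orthogonal z w" and xyz: "x = y + z"
      using orthogonal_subspace_decomp_exists by blast
    from y subR have "y \<in> range (\<lambda>u. B *v u)" by (metis span_eq_iff)
    then obtain u0 where u0: "y = B *v u0" by blast
    have "inner z (B *v (transpose B *v z)) = 0" using z[of "B *v (transpose B *v z)"]
      by (simp add: span_base orthogonal_def)
    hence Btz: "transpose B *v z = 0" using tr_inner[of B z "transpose B *v z"] by simp
    obtain p q where p: "p \<in> span W" and q: "\<And>w. w \<in> span W \<Longrightarrow> orthogonal q w"
      and upq: "u0 = p + q"
      using orthogonal_subspace_decomp_exists by blast
    have pW: "p \<in> W" using p subW by (metis span_eq_iff)
    have "inner q (transpose B *v (B *v q)) = 0" using q[of "transpose B *v (B *v q)"]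
      by (simp add: span_base orthogonal_def W_def)
    hence Bq: "B *v q = 0" using tr_inner2[of q B "B *v q"] by simp
    have "transpose B *v (B *v p) = transpose B *v x"
      using Btz Bq by (simp add: xyz u0 upq matrix_vector_right_distrib)
    with pW show ?thesis unfolding R_def by blast
  qed
  define f where "f x = (THE v. R x v)" for x
  have Rf: "R x (f x)" for x unfolding f_def using ex uniq by (metis theI)
  have feq: "f x = v" if "R x v" for x v using Rf uniq that by blast
  have lin: "linear f"
  proof
    fix x y
    show "f (x + y) = f x + f y"
      apply (rule feq)
      using Rf[of x] Rf[of y] subW unfolding R_def
      by (simp add: subspace_add matrix_vector_right_distrib)
  next
    fix c x
    show "f (c *\<^sub>R x) = c *\<^sub>R f x"
      apply (rule feq)
      using Rf[of x] subW unfolding R_def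
      by (simp add: subspace_scale matrix_vector_mult_scaleR)
  qed
  define Y where "Y = matrix f"
  have Yv: "Y *v x = f x" for x unfolding Y_def using lin
    by (simp add: matrix_works linear_matrix_vector_mul_eq)
  have BfB: "B *v f (B *v x) = B *v x" for x
  proof -
    have "transpose B *v (B *v (f (B *v x) - x)) = 0" using Rf[of "B *v x"] unfolding R_def
      by (simp add: matrix_vector_mult_diff_distrib)
    hence "B *v (f (B *v x) - x) = 0" by (rule BtB0)
    thus ?thesis by (simp add: matrix_vector_mult_diff_distrib)
  qed
  have e1: "B ** Y ** B = B"
    by (simp add: matrix_eq Yv BfB flip: matrix_vector_mul_assoc)
  have e2: "Y ** B ** Y = Y"
  proof -
    have "f (B *v f x) = f x" for x
      by (rule feq) (use Rf[of x] in \<open>simp add: R_def\<close>)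
    thus ?thesis by (simp add: matrix_eq Yv flip: matrix_vector_mul_assoc)
  qed
  have e3: "transpose (B ** Y) = B ** Y"
  proof (rule sym_by_inner)
    fix x y
    have "inner (B *v f x) y = inner (f x) (transpose B *v y)" by (rule tr_inner2[symmetric])
    also have "\<dots> = inner (f x) (transpose B *v (B *v f y))" using Rf[of y] unfolding R_def by simp
    also have "\<dots> = inner (B *v f x) (B *v f y)" by (rule tr_inner2)
    finally have 1: "inner (B *v f x) y = inner (B *v f x) (B *v f y)" .
    have "inner x (B *v f y) = inner (transpose B *v x) (f y)" by (rule tr_inner[symmetric])
    also have "\<dots> = inner (transpose B *v (B *v f x)) (f y)" using Rf[of x] unfolding R_def by simp
    also have "\<dots> = inner (B *v f x) (B *v f y)" by (rule tr_inner)
    finally have 2: "inner x (B *v f y) = inner (B *v f x) (B *v f y)" .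
    note 1 moreover note 2
    ultimately show "inner ((B ** Y) *v x) y = inner x ((B ** Y) *v y)"
      by (simp add: Yv flip: matrix_vector_mul_assoc)
  qed
  have e4: "transpose (Y ** B) = Y ** B"
  proof (rule sym_by_inner)
    fix x y
    obtain a where a: "f (B *v x) = transpose B *v a" using Rf[of "B *v x"] unfolding R_def W_def by auto
    obtain c where c: "f (B *v y) = transpose B *v c" using Rf[of "B *v y"] unfolding R_def W_def by auto
    have "inner (f (B *v x)) y = inner a (B *v y)" unfolding a by (rule tr_inner)
    also have "\<dots> = inner a (B *v f (B *v y))" by (simp add: BfB)
    also have "\<dots> = inner (f (B *v x)) (f (B *v y))" unfolding a by (rule tr_inner[symmetric])
    finally have 1: "inner (f (B *v x)) y = inner (f (B *v x)) (f (B *v y))" .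
    have "inner x (f (B *v y)) = inner (B *v x) c" unfolding c by (rule tr_inner2)
    also have "\<dots> = inner (B *v f (B *v x)) c" by (simp add: BfB)
    also have "\<dots> = inner (f (B *v x)) (f (B *v y))" unfolding c by (rule tr_inner2[symmetric])
    finally have 2: "inner x (f (B *v y)) = inner (f (B *v x)) (f (B *v y))" .
    note 1 moreover note 2
    ultimately show "inner ((Y ** B) *v x) y = inner x ((Y ** B) *v y)"
      by (simp add: Yv flip: matrix_vector_mul_assoc)
  qed
  show ?thesis using e1 e2 e3 e4 by blast
qed

lemma mp_unique:
  fixes B :: "real^'n^'m" and X Z :: "real^'m^'n"
  assumes x1: "B ** X ** B = B" and x2: "X ** B ** X = X" and x3: "transpose (B ** X) = B ** X"
    and x4: "transpose (X ** B) = X ** B"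
    and z1: "B ** Z ** B = B" and z2: "Z ** B ** Z = Z" and z3: "transpose (B ** Z) = B ** Z"
    and z4: "transpose (Z ** B) = Z ** B"
  shows "X = Z"
proof -
  have "X = X ** (B ** X)" using x2 by (simp add: matrix_mul_assoc)
  also have "\<dots> = X ** transpose (B ** X)" using x3 by simp
  also have "\<dots> = X ** transpose X ** transpose B" by (simp add: matrix_transpose_mul matrix_mul_assoc)
  also have "\<dots> = X ** transpose X ** transpose (B ** Z ** B)" using z1 by simp
  also have "\<dots> = X ** transpose (B ** X) ** transpose (B ** Z)"
    by (simp add: matrix_transpose_mul matrix_mul_assoc)
  also have "\<dots> = X ** (B ** X) ** (B ** Z)" using x3 z3 by simp
  also have "\<dots> = (X ** B ** X) ** B ** Z" by (simp add: matrix_mul_assoc)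
  also have "\<dots> = X ** B ** Z" using x2 by simp
  finally have X: "X = X ** B ** Z" .
  have "Z = (Z ** B) ** Z" using z2 by simp
  also have "\<dots> = transpose (Z ** B) ** Z" using z4 by simp
  also have "\<dots> = transpose B ** transpose Z ** Z" by (simp add: matrix_transpose_mul)
  also have "\<dots> = transpose (B ** X ** B) ** transpose Z ** Z" using x1 by simp
  also have "\<dots> = transpose (X ** B) ** transpose (Z ** B) ** Z"
    by (simp add: matrix_transpose_mul matrix_mul_assoc)
  also have "\<dots> = (X ** B) ** (Z ** B) ** Z" using x4 z4 by simp
  also have "\<dots> = X ** B ** (Z ** B ** Z)" by (simp add: matrix_mul_assoc)
  also have "\<dots> = X ** B ** Z" using z2 by simp
  finally show ?thesis using X by simp
qed

lemma NN2: "N ** N = mat 1 \<Longrightarrow> A ** N ** N = (A::real^'n^'m)"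
  by (metis matrix_mul_assoc matrix_mul_rid)

lemma impinv_eq1:
  fixes N B :: "real^'n^'n"
  assumes w: "weight N"
  shows "B ** N ** impinv N N B ** N ** B = B"
proof -
  have tN: "transpose N = N" and NN: "N ** N = mat 1" using w unfolding weight_def by auto
  have NN2': "A ** N ** N = A" for A :: "real^'n^'n" using NN2[OF NN] .
  define P where "P X \<longleftrightarrow> iprod N (iprod N B X) B = B \<and>
      iprod N (iprod N X B) X = X \<and>
      iadj N N (iprod N B X) = iprod N B X \<and>
      iadj N N (iprod N X B) = iprod N X B" for X
  have Pdef: "P X \<longleftrightarrow> B ** N ** X ** N ** B = B \<and> X ** N ** B ** N ** X = X \<and>
     N ** transpose (B ** N ** X) ** N = B ** N ** X \<and>
     N ** transpose (X ** N ** B) ** N = X ** N ** B" for X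
    unfolding P_def iprod_def iadj_def by simp
  obtain Y where y1: "B ** Y ** B = B" and y2: "Y ** B ** Y = Y"
     and y3: "transpose (B ** Y) = B ** Y" and y4: "transpose (Y ** B) = Y ** B"
    using mp_exists[of B] by blast
  have PY: "P (N ** Y ** N)"
    unfolding Pdef
  proof (intro conjI)
    show "B ** N ** (N ** Y ** N) ** N ** B = B"
      using y1 by (simp add: matrix_mul_assoc NN2' NN)
    have "N ** Y ** N ** N ** B ** N ** (N ** Y ** N) = N ** (Y ** B ** Y) ** N"
      by (simp add: matrix_mul_assoc NN2' NN)
    then show "N ** Y ** N ** N ** B ** N ** (N ** Y ** N) = N ** Y ** N" using y2 by simp
    have "transpose (B ** N ** (N ** Y ** N)) = N ** transpose (B ** Y)"
      by (simp add: matrix_transpose_mul matrix_mul_assoc NN2' tN)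
    then show "N ** transpose (B ** N ** (N ** Y ** N)) ** N = B ** N ** (N ** Y ** N)"
      using y3 by (simp add: matrix_mul_assoc NN2' NN)
    have "transpose (N ** Y ** N ** N ** B) = transpose (Y ** B) ** N"
      by (simp add: matrix_transpose_mul matrix_mul_assoc NN2' tN)
    then show "N ** transpose (N ** Y ** N ** N ** B) ** N = N ** Y ** N ** N ** B"
      using y4 by (simp add: matrix_mul_assoc NN2' NN)
  qed
  have PU: "X = N ** Y ** N" if "P X" for X
  proof -
    from that have p1: "B ** N ** X ** N ** B = B" and p2: "X ** N ** B ** N ** X = X"
      and p3: "N ** transpose (B ** N ** X) ** N = B ** N ** X"
      and p4: "N ** transpose (X ** N ** B) ** N = X ** N ** B" unfolding Pdef by auto
    define Z where "Z = N ** X ** N"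
    have t3: "transpose (B ** N ** X) = N ** (B ** N ** X) ** N"
    proof -
      have "N ** (N ** transpose (B ** N ** X) ** N) ** N = N ** (B ** N ** X) ** N" using p3 by simp
      thus ?thesis by (simp add: matrix_mul_assoc NN2' NN)
    qed
    have t4: "transpose (X ** N ** B) = N ** (X ** N ** B) ** N"
    proof -
      have "N ** (N ** transpose (X ** N ** B) ** N) ** N = N ** (X ** N ** B) ** N" using p4 by simp
      thus ?thesis by (simp add: matrix_mul_assoc NN2' NN)
    qed
    have z1: "B ** Z ** B = B" using p1 by (simp add: Z_def matrix_mul_assoc)
    have z2: "Z ** B ** Z = Z"
    proof -
      have "Z ** B ** Z = N ** (X ** N ** B ** N ** X) ** N" by (simp add: Z_def matrix_mul_assoc)
      thus ?thesis using p2 by (simp add: Z_def)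
    qed
    have z3: "transpose (B ** Z) = B ** Z"
    proof -
      have "transpose (B ** Z) = transpose N ** transpose (B ** N ** X)"
        by (simp add: Z_def matrix_transpose_mul matrix_mul_assoc)
      also have "\<dots> = B ** Z" by (simp add: t3 tN Z_def matrix_mul_assoc NN2' NN)
      finally show ?thesis .
    qed
    have z4: "transpose (Z ** B) = Z ** B"
    proof -
      have "transpose (Z ** B) = transpose (X ** N ** B) ** transpose N"
        by (simp add: Z_def matrix_transpose_mul matrix_mul_assoc)
      also have "\<dots> = Z ** B" by (simp add: t4 tN Z_def matrix_mul_assoc NN2' NN)
      finally show ?thesis .
    qed
    have "Z = Y" using mp_unique[OF z1 z2 z3 z4 y1 y2 y3 y4] .
    hence "N ** Z ** N = N ** Y ** N" by simp
    thus ?thesis by (simp add: Z_def matrix_mul_assoc NN2' NN)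
  qed
  have "P (impinv N N B)"
    unfolding impinv_def P_def[symmetric]
    using PY PU by (metis theI)
  thus ?thesis unfolding Pdef by blast
qed

theorem lemma3p13:
  fixes M :: "real^'m^'m" and N :: "real^'n^'n" and A :: "real^'n^'m"
    and K :: "(real^'n) set"
  assumes "weight M" and "weight N"
    and "M ** A = A ** N"
    and "is_cone K" and "closed K"
    and "iimage N (impinv N N (iprod M (iadj M N A) A)) (idual N K)
           \<subseteq> msum K (inull N (iprod N A (mat 1)))"
  shows "idual N K \<inter> irange M (iadj M N (iprod N A (mat 1)))
           \<subseteq> msum (iimage N (iprod M (iadj M N A) A) K) (inull N (iprod N A (mat 1)))"
proof
  have tN: "transpose N = N" and NN: "N ** N = mat 1" using assms(2) unfolding weight_def by auto
  have tM: "transpose M = M" and MM: "M ** M = mat 1" using assms(1) unfolding weight_def by auto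
  define B where "B = iprod M (iadj M N A) A"
  have Bdef: "B = N ** transpose A ** A"
    unfolding B_def iprod_def iadj_def using MM by (metis NN2 matrix_mul_assoc matrix_mul_rid)
  define X where "X = impinv N N B"
  have eq1: "B ** N ** X ** N ** B = B" unfolding X_def by (rule impinv_eq1[OF assms(2)])
  have NAt: "N ** transpose A = transpose A ** M"
    by (metis assms(3) matrix_transpose_mul tM tN)
  fix y assume y: "y \<in> idual N K \<inter> irange M (iadj M N (iprod N A (mat 1)))"
  then obtain w where yw0: "y = iprodv M (iadj M N (iprod N A (mat 1))) w"
    unfolding irange_def by blast
  have yw: "y = transpose A *v w"
  proof -
    have "iadj M N (iprod N A (mat 1)) ** M = N ** N ** transpose A"
      unfolding iadj_def iprod_def
      by (simp add: matrix_transpose_mul tN matrix_mul_assoc NN2[OF MM])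
    then show ?thesis using yw0 NN unfolding iprodv_def
      by (simp add: matrix_vector_mul_assoc)
  qed
  have "iprodv N X y \<in> iimage N X (idual N K)" using y unfolding iimage_def by blast
  with assms(6) obtain k z where k: "k \<in> K" and z: "z \<in> inull N (iprod N A (mat 1))"
    and kz: "iprodv N X y = k + z"
    unfolding msum_def X_def B_def by blast
  have Az: "A *v z = 0"
    using z NN unfolding inull_def iprodv_def iprod_def
    by (simp add: matrix_vector_mul_assoc NN2[OF NN])
  have BNz: "B *v (N *v z) = 0"
  proof -
    have "A *v (N *v z) = M *v (A *v z)" by (simp add: matrix_vector_mul_assoc assms(3))
    thus ?thesis by (simp add: Az Bdef flip: matrix_vector_mul_assoc)
  qed
  obtain Y where Y1: "A ** Y ** A = A" and Y3: "transpose (A ** Y) = A ** Y"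
    using mp_exists[of A] by blast
  have AtAY: "transpose A = transpose A ** A ** Y"
    by (metis Y1 Y3 matrix_transpose_mul matrix_mul_assoc)
  define u where "u = Y *v (M *v w)"
  have yBu: "y = B *v u"
  proof -
    have "y = N ** N ** transpose A *v w" using yw NN by simp
    also have "\<dots> = N ** transpose A ** M *v w" using NAt by (metis matrix_mul_assoc)
    also have "\<dots> = N ** (transpose A ** A ** Y) ** M *v w" using AtAY by simp
    also have "\<dots> = B *v u" by (simp add: Bdef u_def matrix_mul_assoc matrix_vector_mul_assoc)
    finally show ?thesis .
  qed
  have "iprodv N B k = B *v (N *v (X *v (N *v y) - z))"
    using kz unfolding iprodv_def by (metis add_diff_cancel_right')
  also have "\<dots> = (B ** N ** X ** N ** B) *v u - B *v (N *v z)"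
    by (simp add: yBu matrix_vector_mult_diff_distrib matrix_vector_mul_assoc matrix_mul_assoc)
  also have "\<dots> = y" using eq1 BNz yBu by simp
  finally have yk: "y = iprodv N B k + 0" by simp
  have "iprodv N B k \<in> iimage N (iprod M (iadj M N A) A) K" using k unfolding iimage_def B_def by blast
  moreover have "0 \<in> inull N (iprod N A (mat 1))" unfolding inull_def iprodv_def by simp
  ultimately show "y \<in> msum (iimage N (iprod M (iadj M N A) A) K) (inull N (iprod N A (mat 1)))"
    using yk unfolding msum_def by blast
qed

end
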